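(* Let $L>0$ and let $f:\mathbb{R}\times\mathbb{R}\to\mathbb{R}$ be continuous, $L$-periodic in the first argument, and continuously differentiable in the second argument. Let $\phi:[x_0,+\infty)\to\mathbb{R}$ be a bounded solution of $\phi_{xx}=f(x,\phi)$, and assume $$\min_{x\in[0,L],\ y\in[\inf_{x\ge x_0}\phi(x),\,\sup_{x\ge x_0}\phi(x)]}\frac{\partial f(x,y)}{\partial y}>0 .$$ Then there exists an $L$-periodic solution $\varphi$ of $\varphi_{xx}=f(x,\varphi)$ such that $$\lim_{x\to+\infty}\big(|\phi(x)-\varphi(x)|+|\phi_x(x)-\varphi_x(x)|\big)=0 .$$ *)

theory Defs
  imports "HOL-Analysis.Analysis"
begin

end

theory Submission
  imports Defs
begin


lemma real_derivative_sequence: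
  fixes S :: "real set" and f f' :: "nat \<Rightarrow> real \<Rightarrow> real"
  assumes cvs: "convex S"
      and df:  "\<And>n x. x \<in> S \<Longrightarrow> (f n has_field_derivative f' n x) (at x within S)"
      and conv: "\<And>e. 0 < e \<Longrightarrow> \<exists>N. \<forall>n x. n \<ge> N \<longrightarrow> x \<in> S \<longrightarrow> norm (f' n x - g' x) \<le> e"
      and x: "x \<in> S" and tf: "((\<lambda>n. f n x) \<longlongrightarrow> l) sequentially"
    shows "\<exists>g. \<forall>x \<in> S. ((\<lambda>n. f n x) \<longlongrightarrow> g x) sequentially \<and>
                       (g has_field_derivative (g' x)) (at x within S)"
    unfolding has_field_derivative_def
  proof (rule has_derivative_sequence [OF cvs _ _ x])
    show "(\<lambda>n. f n x) \<longlonglongrightarrow> l"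
      by (rule tf)
  next 
    have **: "\<exists>N. \<forall>n\<ge>N. \<forall>x\<in>S. \<forall>h. norm (f' n x * h - g' x * h) \<le> \<epsilon> * norm h"
      if "\<epsilon> > 0" for \<epsilon>::real 
      by (metis that left_diff_distrib mult_right_mono norm_ge_zero norm_mult conv)
    show "\<And>e. e > 0 \<Longrightarrow> \<forall>\<^sub>F n in sequentially. \<forall>x\<in>S. \<forall>h. norm (f' n x * h - g' x * h) \<le> e * norm h"
      unfolding eventually_sequentially by (blast intro: **)
  qed (metis has_field_derivative_def df)

lemma geom_seq:
  fixes s :: "nat \<Rightarrow> real"
  assumes q: "0 \<le> q" "q < 1" and d: "\<And>j. \<bar>s (Suc j) - s j\<bar> \<le> C * q^j"
  shows "convergent s" "\<And>n. \<bar>lim s - s n\<bar> \<le> C * q^n / (1-q)"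
proof -
  define d where "d j = s (Suc j) - s j" for j
  have sg: "summable (\<lambda>j. C * q^j)" using q by (intro summable_mult summable_geometric) auto
  have sd: "summable d"
    by (rule summable_comparison_test'[OF sg]) (use d in \<open>auto simp: d_def\<close>)
  have sn: "s n = s 0 + (\<Sum>j<n. d j)" for n
    by (induction n) (auto simp: d_def)
  have lim1: "s \<longlonglongrightarrow> s 0 + suminf d"
  proof -
    have "(\<lambda>n. s 0 + (\<Sum>j<n. d j)) = s" by (rule ext, rule sn[symmetric])
    moreover have "(\<lambda>n. s 0 + (\<Sum>j<n. d j)) \<longlonglongrightarrow> s 0 + suminf d"
      by (intro tendsto_add tendsto_const summable_LIMSEQ sd)
    ultimately show ?thesis by simp
  qed
  then show "convergent s" by (auto simp: convergent_def)
  have ls: "lim s = s 0 + suminf d" using lim1 by (rule limI)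
  fix n
  have "suminf d = (\<Sum>j. d (j + n)) + (\<Sum>j<n. d j)"
    using suminf_split_initial_segment[OF sd, of n] by simp
  hence e: "lim s - s n = (\<Sum>j. d (j + n))" using ls sn[of n] by linarith
  have sg2: "summable (\<lambda>j. C * q^n * q^j)" using q by (intro summable_mult summable_geometric) auto
  have "\<bar>\<Sum>j. d (j + n)\<bar> \<le> (\<Sum>j. C * q^n * q^j)"
  proof -
    have dj: "\<bar>d (j + n)\<bar> \<le> C * q^n * q^j" for j
    proof -
      have "C * q^(j+n) = C * q^n * q^j" by (simp add: power_add algebra_simps)
      then show ?thesis using d[of "j+n"] unfolding d_def by argo
    qed
    have sa: "summable (\<lambda>j. \<bar>d (j + n)\<bar>)"
      by (rule summable_comparison_test'[OF sg2]) (use dj in auto)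
    have "\<bar>\<Sum>j. d (j + n)\<bar> \<le> (\<Sum>j. \<bar>d (j + n)\<bar>)" by (rule summable_rabs[OF sa])
    also have "\<dots> \<le> (\<Sum>j. C * q^n * q^j)"
      by (rule suminf_le[OF _ sa sg2]) (use dj in auto)
    finally show ?thesis .
  qed
  also have "(\<Sum>j. C * q^n * q^j) = C * q^n / (1-q)"
    using q by (simp add: suminf_mult suminf_geometric divide_simps)
  finally show "\<bar>lim s - s n\<bar> \<le> C * q^n / (1-q)" using e by simp
qed


lemma within_to_at:
  fixes g :: "real \<Rightarrow> real"
  assumes "(g has_real_derivative D) (at t within {x0..})" "t > x0"
  shows "(g has_real_derivative D) (at t)"
proof -
  have "(g has_real_derivative D) (at t within {x0<..})"
    by (rule DERIV_subset[OF assms(1)]) auto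
  moreover have "at t within {x0<..} = at t" by (rule at_within_open) (use assms in auto)
  ultimately show ?thesis by simp
qed

lemma max_principle:
  fixes u u1 u2 :: "real \<Rightarrow> real"
  assumes m: "m > 0" and B: "B \<ge> 0"
  and du: "\<forall>t\<ge>x0. (u has_real_derivative u1 t) (at t within {x0..})"
  and du1: "\<forall>t\<ge>x0. (u1 has_real_derivative u2 t) (at t within {x0..})"
  and ub: "\<forall>t\<ge>x0. u t \<le> B"
  and pos: "\<forall>t\<ge>x0. u t > 0 \<longrightarrow> u2 t \<ge> m * u t"
  shows "\<forall>t\<ge>x0. u t \<le> B * exp (- sqrt m * (t - x0))"
proof (intro allI impI)
  fix t1 assume t1: "t1 \<ge> x0"
  define \<alpha> where "\<alpha> = sqrt m"
  have al: "\<alpha> > 0" "\<alpha> * \<alpha> = m" using m by (auto simp: \<alpha>_def)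
  have main: "u t1 \<le> B * exp (- \<alpha> * (t1 - x0)) + \<epsilon> * exp (\<alpha> * (t1 - x0))" if ep: "\<epsilon> > 0" for \<epsilon>
  proof (rule ccontr)
    define z where "z t = u t - B * exp (- \<alpha> * (t - x0)) - \<epsilon> * exp (\<alpha> * (t - x0))" for t
    define z1 where "z1 t = u1 t + \<alpha> * B * exp (- \<alpha> * (t - x0)) - \<alpha> * \<epsilon> * exp (\<alpha> * (t - x0))" for t
    define z2 where "z2 t = u2 t - m * B * exp (- \<alpha> * (t - x0)) - m * \<epsilon> * exp (\<alpha> * (t - x0))" for t
    have dz: "(z has_real_derivative z1 t) (at t within {x0..})" if "t \<ge> x0" for t
    proof -
      have hu: "(u has_real_derivative u1 t) (at t within {x0..})" using du that by auto
      show ?thesis unfolding z_def[abs_def] z1_def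
        apply (rule derivative_eq_intros hu refl)+
        apply (simp add: algebra_simps)
        done
    qed
    have dz1: "(z1 has_real_derivative z2 t) (at t within {x0..})" if "t \<ge> x0" for t
    proof -
      have hu: "(u1 has_real_derivative u2 t) (at t within {x0..})" using du1 that by auto
      show ?thesis unfolding z1_def[abs_def] z2_def
        apply (rule derivative_eq_intros hu refl)+
        apply (simp add: algebra_simps flip: al(2))
        done
    qed
    assume "\<not> ?thesis"
    hence zt1: "z t1 > 0" by (simp add: z_def)
    define T where "T = max (t1 + 1) (x0 + B / (\<epsilon> * \<alpha>) + 1)"
    have T: "T > t1" "T > x0" unfolding T_def using t1 by auto
    have "exp (\<alpha> * (T - x0)) \<ge> 1 + \<alpha> * (T - x0)" by (rule exp_ge_add_one_self)
    moreover have "\<alpha> * (T - x0) \<ge> \<alpha> * (B / (\<epsilon> * \<alpha>) + 1)"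
      using al by (intro mult_left_mono) (auto simp: T_def)
    moreover have "\<alpha> * (B / (\<epsilon> * \<alpha>) + 1) = B / \<epsilon> + \<alpha>" using al ep by (simp add: field_simps)
    ultimately have "exp (\<alpha> * (T - x0)) > B / \<epsilon>" using al by linarith
    hence "\<epsilon> * exp (\<alpha> * (T - x0)) > B" using ep by (simp add: field_simps)
    moreover have "B * exp (- \<alpha> * (T - x0)) \<ge> 0" using B by simp
    moreover have "u T \<le> B" using ub T by auto
    ultimately have zT: "z T < 0" by (simp add: z_def)
    have zx0: "z x0 < 0" using ub ep by (auto simp: z_def)
    have "continuous_on {x0..T} z"
      by (rule DERIV_continuous_on, rule DERIV_subset[OF dz]) auto
    then obtain s where s: "s \<in> {x0..T}" and smax: "\<forall>y\<in>{x0..T}. z y \<le> z s"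
      using continuous_attains_sup[of "{x0..T}" z] T by auto
    have zs: "z s > 0" using smax t1 T zt1 by force
    have sx: "s > x0" "s < T" using s zs zx0 zT by (auto simp: order.order_iff_strict)
    have dzs: "(z has_real_derivative z1 y) (at y)" if "y > x0" for y
      using within_to_at[OF dz] that by auto
    have dz1s: "(z1 has_real_derivative z2 s) (at s)" using within_to_at[OF dz1] sx by auto
    have "z1 s = 0"
      by (rule DERIV_local_max[OF dzs[OF sx(1)], of "min (s - x0) (T - s)"]) (use sx smax in \<open>auto simp: abs_less_iff\<close>)
    have "u s > 0" using zs ep B by (auto simp: z_def) (smt (verit) exp_gt_zero mult_nonneg_nonneg mult_pos_pos)
    hence "u2 s \<ge> m * u s" using pos sx by auto
    hence "z2 s \<ge> m * z s" by (simp add: z2_def z_def algebra_simps)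
    hence "z2 s > 0" using zs m by (smt (verit) mult_pos_pos)
    then obtain d where d: "d > 0" "\<forall>h>0. h < d \<longrightarrow> z1 s < z1 (s + h)"
      using DERIV_pos_inc_right[OF dz1s] by blast
    define h where "h = min (d/2) ((T - s)/2)"
    have h: "h > 0" "h < d" "s + h \<le> T" using d(1) sx unfolding h_def by (auto simp: min_def field_simps)
    have "\<exists>x\<in>{s<..<s+h}. z (s + h) - z s = (*) (z1 x) (s + h - s)"
    proof (rule mvt_simple)
      show "s < s + h" using h by simp
      fix x assume x: "s \<le> x" "x \<le> s + h"
      have "x > x0" using x sx by linarith
      hence "(z has_real_derivative z1 x) (at x)" by (rule dzs)
      hence "(z has_real_derivative z1 x) (at x within {s..s+h})"
        by (rule has_field_derivative_at_within)
      thus "(z has_derivative (*) (z1 x)) (at x within {s..s+h})"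
        unfolding has_field_derivative_def .
    qed
    then obtain x where x: "x \<in> {s<..<s+h}" "z (s + h) - z s = z1 x * h" by auto
    have "z1 x > 0" using d(2)[rule_format, of "x - s"] x h \<open>z1 s = 0\<close> by auto
    hence "z (s + h) > z s" using x h by (smt (verit) mult_pos_pos)
    moreover have "z (s + h) \<le> z s" using smax h sx by auto
    ultimately show False by simp
  qed
  show "u t1 \<le> B * exp (- sqrt m * (t1 - x0))"
  proof (rule ccontr)
    define X where "X = B * exp (- \<alpha> * (t1 - x0))"
    define Y where "Y = exp (\<alpha> * (t1 - x0))"
    assume "\<not> ?thesis"
    hence gt: "u t1 > X" by (simp add: X_def \<alpha>_def)
    have Y: "Y > 0" by (simp add: Y_def)
    have "u t1 \<le> X + ((u t1 - X) / (2 * Y)) * Y"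
      using main[of "(u t1 - X) / (2 * Y)"] gt Y by (simp add: X_def Y_def)
    also have "\<dots> = X + (u t1 - X) / 2" using Y by simp
    finally have "u t1 \<le> X + (u t1 - X) / 2" .
    thus False using gt by (simp add: field_simps)
  qed
qed

theorem theorem1:
  fixes L x0 :: real
    and f fy :: "real \<Rightarrow> real \<Rightarrow> real"
    and \<phi> \<phi>' :: "real \<Rightarrow> real"
  assumes L_pos: "L > 0"
    and f_cont: "continuous_on UNIV (\<lambda>(x, y). f x y)"
    and f_periodic: "\<forall>x y. f (x + L) y = f x y"
    and f_deriv_y: "\<forall>x y. ((\<lambda>y. f x y) has_real_derivative fy x y) (at y)"
    and fy_cont: "continuous_on UNIV (\<lambda>(x, y). fy x y)"
    and phi_deriv: "\<forall>x \<ge> x0. (\<phi> has_real_derivative \<phi>' x) (at x within {x0..})"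
    and phi_deriv2: "\<forall>x \<ge> x0. (\<phi>' has_real_derivative f x (\<phi> x)) (at x within {x0..})"
    and phi_bounded: "bounded (\<phi> ` {x0..})"
    and min_pos: "(INF p \<in> {0..L} \<times> {Inf (\<phi> ` {x0..}) .. Sup (\<phi> ` {x0..})}. fy (fst p) (snd p)) > 0"
  shows "\<exists>\<psi> \<psi>' :: real \<Rightarrow> real.
           (\<forall>x. \<psi> (x + L) = \<psi> x)
         \<and> (\<forall>x. (\<psi> has_real_derivative \<psi>' x) (at x))
         \<and> (\<forall>x. (\<psi>' has_real_derivative f x (\<psi> x)) (at x))
         \<and> ((\<lambda>x. \<bar>\<phi> x - \<psi> x\<bar> + \<bar>\<phi>' x - \<psi>' x\<bar>) \<longlongrightarrow> 0) at_top"
proof -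
  define a where "a = Inf (\<phi> ` {x0..})"
  define b where "b = Sup (\<phi> ` {x0..})"
  define K where "K = {0..L} \<times> {a..b}"
  define m0 where "m0 = (INF p \<in> K. fy (fst p) (snd p))"
  have m0: "m0 > 0" using min_pos by (simp add: m0_def K_def a_def b_def)
  have phab: "a \<le> \<phi> x \<and> \<phi> x \<le> b" if "x \<ge> x0" for x
  proof -
    have "bdd_above (\<phi> ` {x0..})" "bdd_below (\<phi> ` {x0..})"
      using phi_bounded by (auto intro: bounded_imp_bdd_above bounded_imp_bdd_below)
    thus ?thesis unfolding a_def b_def using that by (auto intro: cInf_lower cSup_upper)
  qed
  have ab: "a \<le> b" using phab[of x0] by simp
  have fper: "f (x + real n * L) y = f x y" for x y n
  proof (induction n)
    case (Suc n)
    have "f (x + real (Suc n) * L) y = f ((x + real n * L) + L) y" by (simp add: algebra_simps)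
    also have "\<dots> = f (x + real n * L) y" using f_periodic by simp
    finally show ?case using Suc by simp
  qed simp
  have fyper: "fy (x + real n * L) y = fy x y" for x y n
  proof -
    have "((\<lambda>y. f x y) has_real_derivative fy (x + real n * L) y) (at y)"
      using f_deriv_y[rule_format, of "x + real n * L" y] ext[of "f (x + real n * L)" "f x", OF fper] by simp
    thus ?thesis using f_deriv_y DERIV_unique by blast
  qed
  have red: "\<exists>x'\<in>{0..L}. fy x y = fy x' y" for x y
  proof -
    define k where "k = \<lfloor>x / L\<rfloor>"
    define x' where "x' = x - k * L"
    have "k \<le> x / L" "x / L < k + 1" unfolding k_def by linarith+
    hence "k * L \<le> x" "x < (k + 1) * L" using L_pos by (auto simp: field_simps)
    hence x': "x' \<in> {0..L}" by (auto simp: x'_def algebra_simps)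
    show ?thesis
    proof (cases "k \<ge> 0")
      case True
      hence "x = x' + real (nat k) * L" by (simp add: x'_def)
      thus ?thesis using x' fyper by metis
    next
      case False
      hence "x' = x + real (nat (-k)) * L" by (simp add: x'_def)
      thus ?thesis using x' fyper by metis
    qed
  qed
  have Kc: "compact K" unfolding K_def by (intro compact_Times compact_Icc)
  have fyc: "continuous_on K (\<lambda>p. fy (fst p) (snd p))"
    using continuous_on_subset[OF fy_cont] by (simp add: case_prod_beta')
  have "compact ((\<lambda>p. fy (fst p) (snd p)) ` K)" by (rule compact_continuous_image[OF fyc Kc])
  hence bK: "bounded ((\<lambda>p. fy (fst p) (snd p)) ` K)" by (rule compact_imp_bounded)
  then obtain M0 where M0: "\<forall>p\<in>K. \<bar>fy (fst p) (snd p)\<bar> \<le> M0" unfolding bounded_iff by auto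
  define M where "M = max M0 0"
  have M: "M \<ge> 0" by (simp add: M_def)
  have fyb: "m0 \<le> fy x y \<and> \<bar>fy x y\<bar> \<le> M" if "a \<le> y" "y \<le> b" for x y
  proof -
    obtain x' where x': "x' \<in> {0..L}" "fy x y = fy x' y" using red by blast
    have p: "(x', y) \<in> K" using x' that by (simp add: K_def)
    have "m0 \<le> fy x' y" unfolding m0_def
      using cINF_lower[OF bounded_imp_bdd_below[OF bK] p] by simp
    moreover have "\<bar>fy x' y\<bar> \<le> M" using M0 p by (force simp: M_def)
    ultimately show ?thesis using x' by simp
  qed
  have fmono: "f x y1 - f x y2 \<ge> m0 * (y1 - y2) \<and> \<bar>f x y1 - f x y2\<bar> \<le> M * (y1 - y2)"
    if "a \<le> y2" "y2 \<le> y1" "y1 \<le> b" for x y1 y2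
  proof (cases "y2 = y1")
    case False
    hence "y2 < y1" using that by simp
    then obtain z where z: "y2 < z" "z < y1" "f x y1 - f x y2 = (y1 - y2) * fy x z"
      using MVT2[of y2 y1 "\<lambda>y. f x y" "fy x"] f_deriv_y by blast
    have "m0 \<le> fy x z" "\<bar>fy x z\<bar> \<le> M" using fyb[of z x] z that by auto
    thus ?thesis using z \<open>y2 < y1\<close>
      by (auto simp: abs_mult mult.commute intro: mult_right_mono)
  qed simp
  have flip: "\<bar>f x y1 - f x y2\<bar> \<le> M * \<bar>y1 - y2\<bar>"
    if "a \<le> y1" "y1 \<le> b" "a \<le> y2" "y2 \<le> b" for x y1 y2
  proof (cases "y2 \<le> y1")
    case True thus ?thesis using fmono[of y2 y1 x] that by simp
  next
    case False thus ?thesis using fmono[of y1 y2 x] that by (simp add: abs_minus_commute)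
  qed

  have dphi: "(\<phi> has_real_derivative \<phi>' x) (at x)" "(\<phi>' has_real_derivative f x (\<phi> x)) (at x)"
    if "x > x0" for x
    using within_to_at[of _ _ x x0] phi_deriv phi_deriv2 that by auto
  have dsh: "((\<lambda>t. \<phi> (t + real n * L)) has_real_derivative \<phi>' (t + real n * L)) (at t)"
            "((\<lambda>t. \<phi>' (t + real n * L)) has_real_derivative f t (\<phi> (t + real n * L))) (at t)"
    if "t + real n * L > x0" for t n
  proof -
    show "((\<lambda>t. \<phi> (t + real n * L)) has_real_derivative \<phi>' (t + real n * L)) (at t)"
      using dphi(1)[OF that] by (simp add: DERIV_shift)
    have "(\<phi>' has_real_derivative f (t + real n * L) (\<phi> (t + real n * L))) (at (t + real n * L))"
      using dphi(2)[OF that] .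
    thus "((\<lambda>t. \<phi>' (t + real n * L)) has_real_derivative f t (\<phi> (t + real n * L))) (at t)"
      by (simp add: DERIV_shift fper)
  qed
  define w where "w t = \<phi> (t + L) - \<phi> t" for t
  define w1 where "w1 t = \<phi>' (t + L) - \<phi>' t" for t
  define w2 where "w2 t = f t (\<phi> (t + L)) - f t (\<phi> t)" for t
  have dw: "(w has_real_derivative w1 t) (at t within {x0..})"
       "(w1 has_real_derivative w2 t) (at t within {x0..})" if "t \<ge> x0" for t
  proof -
    have tL: "t + real 1 * L > x0" using that L_pos by simp
    have h1: "((\<lambda>t. \<phi> (t + L)) has_real_derivative \<phi>' (t + L)) (at t within {x0..})"
      using has_field_derivative_at_within[OF dsh(1)[OF tL]] by simp
    have h2: "((\<lambda>t. \<phi>' (t + L)) has_real_derivative f t (\<phi> (t + L))) (at t within {x0..})"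
      using has_field_derivative_at_within[OF dsh(2)[OF tL]] by simp
    have h3: "(\<phi> has_real_derivative \<phi>' t) (at t within {x0..})"
         "(\<phi>' has_real_derivative f t (\<phi> t)) (at t within {x0..})"
      using phi_deriv phi_deriv2 that by auto
    show "(w has_real_derivative w1 t) (at t within {x0..})"
      unfolding w_def[abs_def] w1_def by (rule DERIV_diff[OF h1 h3(1)])
    show "(w1 has_real_derivative w2 t) (at t within {x0..})"
      unfolding w1_def[abs_def] w2_def by (rule DERIV_diff[OF h2 h3(2)])
  qed
  define Bw where "Bw = b - a"
  define E where "E t = exp (- sqrt m0 * (t - x0))" for t
  have Bw: "Bw \<ge> 0" using ab by (simp add: Bw_def)
  have wab: "a \<le> \<phi> (t + L) \<and> \<phi> (t + L) \<le> b \<and> a \<le> \<phi> t \<and> \<phi> t \<le> b" if "t \<ge> x0" for t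
    using phab[of t] phab[of "t + L"] that L_pos by auto
  have wb1: "\<forall>t\<ge>x0. w t \<le> Bw * E t" unfolding E_def
  proof (rule max_principle[OF m0 Bw])
    show "\<forall>t\<ge>x0. (w has_real_derivative w1 t) (at t within {x0..})"
         "\<forall>t\<ge>x0. (w1 has_real_derivative w2 t) (at t within {x0..})" using dw by auto
    show "\<forall>t\<ge>x0. w t \<le> Bw" unfolding w_def Bw_def using wab by (smt (verit))
    show "\<forall>t\<ge>x0. 0 < w t \<longrightarrow> m0 * w t \<le> w2 t"
      using wab fmono by (auto simp: w_def w2_def)
  qed
  have wb2: "\<forall>t\<ge>x0. - w t \<le> Bw * E t" unfolding E_def
  proof (rule max_principle[OF m0 Bw])
    show "\<forall>t\<ge>x0. ((\<lambda>t. - w t) has_real_derivative - w1 t) (at t within {x0..})"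
         "\<forall>t\<ge>x0. ((\<lambda>t. - w1 t) has_real_derivative - w2 t) (at t within {x0..})"
      using dw by (auto intro: DERIV_minus)
    show "\<forall>t\<ge>x0. - w t \<le> Bw" unfolding w_def Bw_def using wab by (smt (verit))
    show "\<forall>t\<ge>x0. 0 < - w t \<longrightarrow> m0 * - w t \<le> - w2 t"
      using wab fmono by (auto simp: w_def w2_def)
  qed
  have wb: "\<bar>w t\<bar> \<le> Bw * E t" if "t \<ge> x0" for t using wb1 wb2 that by force
  have Emono: "E s \<le> E t" if "t \<le> s" for s t
    unfolding E_def using that m0 by (auto intro: mult_left_mono)
  have w2b: "\<bar>w2 t\<bar> \<le> M * Bw * E t" if "t \<ge> x0" for t
  proof -
    have "\<bar>w2 t\<bar> \<le> M * \<bar>w t\<bar>" unfolding w2_def w_def using flip wab[OF that] by auto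
    also have "\<dots> \<le> M * (Bw * E t)" using wb[OF that] M by (rule mult_left_mono)
    finally show ?thesis by simp
  qed

  define K1 where "K1 = (2 + M) * Bw"
  have K1: "K1 \<ge> 0" using M Bw by (simp add: K1_def)
  have w1b: "\<bar>w1 t\<bar> \<le> K1 * E t" if t: "t \<ge> x0" for t
  proof -
    have "\<exists>x\<in>{t<..<t+1}. w (t + 1) - w t = (*) (w1 x) (t + 1 - t)"
    proof (rule mvt_simple)
      fix x assume x: "t \<le> x" "x \<le> t + 1"
      have "(w has_real_derivative w1 x) (at x within {x0..})" using dw(1)[of x] x t by simp
      hence "(w has_real_derivative w1 x) (at x within {t..t+1})"
        by (rule DERIV_subset) (use t in auto)
      thus "(w has_derivative (*) (w1 x)) (at x within {t..t+1})"
        unfolding has_field_derivative_def .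
    qed simp
    then obtain s where s: "t < s" "s < t + 1" "w (t + 1) - w t = w1 s" by auto
    have "\<bar>w1 s\<bar> \<le> 2 * Bw * E t"
    proof -
      have 1: "\<bar>w t\<bar> \<le> Bw * E t" "\<bar>w (t+1)\<bar> \<le> Bw * E (t+1)" using wb t by auto
      have "Bw * E (t+1) \<le> Bw * E t" using Emono[of t "t+1"] Bw by (simp add: mult_left_mono)
      thus ?thesis using 1 s(3) by linarith
    qed
    have "\<exists>x\<in>{t<..<s}. w1 s - w1 t = (*) (w2 x) (s - t)"
    proof (rule mvt_simple)
      fix x assume x: "t \<le> x" "x \<le> s"
      have "(w1 has_real_derivative w2 x) (at x within {x0..})" using dw(2)[of x] x t by simp
      hence "(w1 has_real_derivative w2 x) (at x within {t..s})"
        by (rule DERIV_subset) (use t in auto)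
      thus "(w1 has_derivative (*) (w2 x)) (at x within {t..s})"
        unfolding has_field_derivative_def .
    qed (use s in simp)
    then obtain r where r: "t < r" "r < s" "w1 s - w1 t = w2 r * (s - t)" by auto
    have "\<bar>w2 r\<bar> \<le> M * Bw * E t"
    proof -
      have 1: "\<bar>w2 r\<bar> \<le> M * Bw * E r" using w2b r t by auto
      have "(M * Bw) * E r \<le> (M * Bw) * E t" using Emono[of t r] r M Bw by (intro mult_left_mono) auto
      thus ?thesis using 1 by linarith
    qed
    hence "\<bar>w2 r * (s - t)\<bar> \<le> M * Bw * E t"
    proof -
      assume h: "\<bar>w2 r\<bar> \<le> M * Bw * E t"
      have "\<bar>w2 r * (s - t)\<bar> = \<bar>w2 r\<bar> * (s - t)" using r by (simp add: abs_mult)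
      also have "\<dots> \<le> \<bar>w2 r\<bar> * 1" using r s by (intro mult_left_mono) auto
      finally show ?thesis using h by simp
    qed
    show ?thesis using \<open>\<bar>w1 s\<bar> \<le> 2 * Bw * E t\<close> \<open>\<bar>w2 r * (s - t)\<bar> \<le> M * Bw * E t\<close> r(3)
      unfolding K1_def by (simp add: algebra_simps)
  qed

  have nnL: "real n * L \<ge> 0" for n using L_pos by simp
  define q where "q = exp (- sqrt m0 * L)"
  have q: "0 \<le> q" "q < 1" using m0 L_pos by (auto simp: q_def)
  have Esh: "E (x + real n * L) = E x * q ^ n" for x n
  proof -
    have "- sqrt m0 * (x + real n * L - x0) = - sqrt m0 * (x - x0) + real n * (- sqrt m0 * L)"
      by (simp add: algebra_simps)
    thus ?thesis unfolding E_def q_def by (simp only: exp_add exp_of_nat_mult)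
  qed
  have E01: "0 < E x" "E x \<le> 1" if "x \<ge> x0" for x
    using Emono[of x0 x] that by (auto simp: E_def)
  have step: "x + real (Suc j) * L = (x + real j * L) + L" for x j by (simp add: algebra_simps)
  have cs: "convergent (\<lambda>n. \<phi> (x + real n * L))"
    "\<And>n. \<bar>lim (\<lambda>n. \<phi> (x + real n * L)) - \<phi> (x + real n * L)\<bar> \<le> Bw * E x * q ^ n / (1 - q)"
    if x: "x \<ge> x0" for x
  proof -
    have d: "\<bar>\<phi> (x + real (Suc j) * L) - \<phi> (x + real j * L)\<bar> \<le> (Bw * E x) * q ^ j" for j
    proof -
      have "x + real j * L \<ge> x0" using x nnL[of j] by linarith
      hence "\<bar>w (x + real j * L)\<bar> \<le> Bw * E (x + real j * L)" by (rule wb)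
      thus ?thesis unfolding step by (simp add: w_def Esh mult.assoc)
    qed
    show "convergent (\<lambda>n. \<phi> (x + real n * L))" using geom_seq(1)[OF q d] .
    show "\<bar>lim (\<lambda>n. \<phi> (x + real n * L)) - \<phi> (x + real n * L)\<bar> \<le> Bw * E x * q ^ n / (1 - q)" for n
      using geom_seq(2)[OF q d] .
  qed
  have cs': "convergent (\<lambda>n. \<phi>' (x + real n * L))"
    "\<And>n. \<bar>lim (\<lambda>n. \<phi>' (x + real n * L)) - \<phi>' (x + real n * L)\<bar> \<le> K1 * E x * q ^ n / (1 - q)"
    if x: "x \<ge> x0" for x
  proof -
    have d: "\<bar>\<phi>' (x + real (Suc j) * L) - \<phi>' (x + real j * L)\<bar> \<le> (K1 * E x) * q ^ j" for j
    proof -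
      have "x + real j * L \<ge> x0" using x nnL[of j] by linarith
      hence "\<bar>w1 (x + real j * L)\<bar> \<le> K1 * E (x + real j * L)" by (rule w1b)
      thus ?thesis unfolding step by (simp add: w1_def Esh mult.assoc)
    qed
    show "convergent (\<lambda>n. \<phi>' (x + real n * L))" using geom_seq(1)[OF q d] .
    show "\<bar>lim (\<lambda>n. \<phi>' (x + real n * L)) - \<phi>' (x + real n * L)\<bar> \<le> K1 * E x * q ^ n / (1 - q)" for n
      using geom_seq(2)[OF q d] .
  qed
  define \<psi> where "\<psi> x = lim (\<lambda>n. \<phi> (x + real n * L))" for x
  define \<psi>' where "\<psi>' x = lim (\<lambda>n. \<phi>' (x + real n * L))" for x
  have lsuc: "lim (\<lambda>n. G (Suc n)) = lim G" for G :: "nat \<Rightarrow> real"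
    unfolding lim_def by (rule arg_cong[where f=The], rule ext) (blast intro: LIMSEQ_Suc LIMSEQ_imp_Suc)
  have limsh: "lim (\<lambda>n. g (x + L + real n * L)) = lim (\<lambda>n. g (x + real n * L))" for g :: "real \<Rightarrow> real" and x
  proof -
    have "(\<lambda>n. g (x + L + real n * L)) = (\<lambda>n. (\<lambda>n. g (x + real n * L)) (Suc n))"
      by (simp add: algebra_simps)
    thus ?thesis using lsuc[of "\<lambda>n. g (x + real n * L)"] by simp
  qed
  have psiper: "\<psi> (x + L) = \<psi> x" "\<psi>' (x + L) = \<psi>' x" for x
    unfolding \<psi>_def \<psi>'_def by (rule limsh)+
  have e: "x + real (Suc n) * L = (x + real n * L) + L" for x n by (simp add: algebra_simps)
  have psiper_n: "\<psi> (x + real n * L) = \<psi> x" for x n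
    by (induction n) (simp_all only: e psiper, simp_all)
  have psiper_n': "\<psi>' (x + real n * L) = \<psi>' x" for x n
    by (induction n) (simp_all only: e psiper, simp_all)

  have psil: "(\<lambda>n. \<phi> (x + real n * L)) \<longlonglongrightarrow> \<psi> x" "(\<lambda>n. \<phi>' (x + real n * L)) \<longlonglongrightarrow> \<psi>' x"
    if "x \<ge> x0" for x
    using cs(1)[OF that] cs'(1)[OF that] unfolding \<psi>_def \<psi>'_def by (simp_all add: convergent_LIMSEQ_iff)
  have unif: "\<bar>\<psi> x - \<phi> (x + real n * L)\<bar> \<le> Bw * q ^ n / (1 - q)"
             "\<bar>\<psi>' x - \<phi>' (x + real n * L)\<bar> \<le> K1 * q ^ n / (1 - q)" if x: "x \<ge> x0" for x n
  proof -
    have c: "C * E x * q ^ n / (1 - q) \<le> C * q ^ n / (1 - q)" if "C \<ge> 0" for C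
    proof -
      have "(C * q ^ n / (1 - q)) * E x \<le> (C * q ^ n / (1 - q)) * 1"
        using E01[OF x] that q by (intro mult_left_mono) auto
      thus ?thesis by (simp add: algebra_simps)
    qed
    show "\<bar>\<psi> x - \<phi> (x + real n * L)\<bar> \<le> Bw * q ^ n / (1 - q)"
      using cs(2)[OF x, of n] c[OF Bw] unfolding \<psi>_def by linarith
    show "\<bar>\<psi>' x - \<phi>' (x + real n * L)\<bar> \<le> K1 * q ^ n / (1 - q)"
      using cs'(2)[OF x, of n] c[OF K1] unfolding \<psi>'_def by linarith
  qed
  have evN: "\<exists>N. \<forall>n\<ge>N. C * q ^ n / (1 - q) \<le> e" if "e > 0" for C e
  proof -
    have "(\<lambda>n. C * q ^ n / (1 - q)) \<longlonglongrightarrow> C * 0 / (1 - q)"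
      using q by (intro tendsto_intros) auto
    hence "eventually (\<lambda>n. C * q ^ n / (1 - q) < e) sequentially"
      using that by (intro order_tendstoD(2)) auto
    thus ?thesis unfolding eventually_sequentially by (meson less_imp_le)
  qed
  have psiab: "a \<le> \<psi> x \<and> \<psi> x \<le> b" if x: "x \<ge> x0" for x
  proof -
    have "\<forall>n. a \<le> \<phi> (x + real n * L) \<and> \<phi> (x + real n * L) \<le> b"
    proof
      fix n
      have "x0 \<le> x + real n * L" using x nnL[of n] by linarith
      thus "a \<le> \<phi> (x + real n * L) \<and> \<phi> (x + real n * L) \<le> b" by (rule phab)
    qed
    thus ?thesis using LIMSEQ_le_const[OF psil(1)[OF x]] LIMSEQ_le_const2[OF psil(1)[OF x]] by blast
  qed
  have D1: "(\<psi> has_real_derivative \<psi>' t) (at t)" if t: "t > x0" for t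
  proof -
    have "\<exists>g. \<forall>x \<in> {x0<..}. ((\<lambda>n. \<phi> (x + real n * L)) \<longlongrightarrow> g x) sequentially \<and>
                       (g has_field_derivative (\<psi>' x)) (at x within {x0<..})"
    proof (rule real_derivative_sequence[where S="{x0<..}" and f="\<lambda>n x. \<phi> (x + real n * L)" and f'="\<lambda>n x. \<phi>' (x + real n * L)" and g'="\<psi>'" and x="x0 + 1" and l="\<psi> (x0 + 1)"])
      show "convex {x0<..}" by simp
      show "((\<lambda>x. \<phi> (x + real n * L)) has_real_derivative \<phi>' (x + real n * L)) (at x within {x0<..})"
        if "x \<in> {x0<..}" for n x
        using that nnL[of n] by (intro has_field_derivative_at_within[OF dsh(1)]) simp
      show "\<exists>N. \<forall>n x. N \<le> n \<longrightarrow> x \<in> {x0<..} \<longrightarrow> norm (\<phi>' (x + real n * L) - \<psi>' x) \<le> e"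
        if e: "e > 0" for e
      proof -
        obtain N where N: "\<forall>n\<ge>N. K1 * q ^ n / (1 - q) \<le> e" using evN[of e K1] e by blast
        show ?thesis
        proof (intro exI[of _ N] allI impI)
          fix n x assume n: "N \<le> n" and x: "x \<in> {x0<..}"
          have "\<bar>\<psi>' x - \<phi>' (x + real n * L)\<bar> \<le> K1 * q ^ n / (1 - q)" using unif(2)[of x n] x by simp
          moreover have "K1 * q ^ n / (1 - q) \<le> e" using N n by simp
          ultimately show "norm (\<phi>' (x + real n * L) - \<psi>' x) \<le> e" by (simp add: abs_minus_commute)
        qed
      qed
      show "x0 + 1 \<in> {x0<..}" by simp
      show "(\<lambda>n. \<phi> (x0 + 1 + real n * L)) \<longlonglongrightarrow> \<psi> (x0 + 1)" by (rule psil) simp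
    qed
    then obtain g where g: "\<forall>x \<in> {x0<..}. ((\<lambda>n. \<phi> (x + real n * L)) \<longlongrightarrow> g x) sequentially \<and>
                       (g has_field_derivative (\<psi>' x)) (at x within {x0<..})" by blast
    have "(g has_field_derivative (\<psi>' t)) (at t within {x0<..})" using g t by auto
    moreover have "at t within {x0<..} = at t" using t by (intro at_within_open) auto
    ultimately have gd: "(g has_field_derivative (\<psi>' t)) (at t)" by simp
    have ge: "g x = \<psi> x" if "x \<in> {x0<..}" for x
    proof -
      have "(\<lambda>n. \<phi> (x + real n * L)) \<longlonglongrightarrow> g x" using g that by blast
      moreover have "(\<lambda>n. \<phi> (x + real n * L)) \<longlonglongrightarrow> \<psi> x" using psil(1)[of x] that by simp
      ultimately show ?thesis by (rule LIMSEQ_unique)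
    qed
    show ?thesis by (rule has_field_derivative_transform_within_open[OF gd, of "{x0<..}"]) (use t ge in auto)
  qed

  have D2: "(\<psi>' has_real_derivative f t (\<psi> t)) (at t)" if t: "t > x0" for t
  proof -
    have "\<exists>g. \<forall>x \<in> {x0<..}. ((\<lambda>n. \<phi>' (x + real n * L)) \<longlongrightarrow> g x) sequentially \<and>
                       (g has_field_derivative (f x (\<psi> x))) (at x within {x0<..})"
    proof (rule real_derivative_sequence[where S="{x0<..}" and f="\<lambda>n x. \<phi>' (x + real n * L)" and f'="\<lambda>n x. f x (\<phi> (x + real n * L))" and g'="\<lambda>x. f x (\<psi> x)" and x="x0 + 1" and l="\<psi>' (x0 + 1)"])
      show "convex {x0<..}" by simp
      show "((\<lambda>x. \<phi>' (x + real n * L)) has_real_derivative f x (\<phi> (x + real n * L))) (at x within {x0<..})"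
        if "x \<in> {x0<..}" for n x
        using that nnL[of n] by (intro has_field_derivative_at_within[OF dsh(2)]) simp
      show "\<exists>N. \<forall>n x. N \<le> n \<longrightarrow> x \<in> {x0<..} \<longrightarrow> norm (f x (\<phi> (x + real n * L)) - f x (\<psi> x)) \<le> e"
        if e: "e > 0" for e
      proof -
        obtain N where N: "\<forall>n\<ge>N. (M * Bw) * q ^ n / (1 - q) \<le> e" using evN[of e "M * Bw"] e by blast
        show ?thesis
        proof (intro exI[of _ N] allI impI)
          fix n x assume n: "N \<le> n" and x: "x \<in> {x0<..}"
          have xn: "x0 \<le> x + real n * L" using x nnL[of n] by simp
          have "\<bar>f x (\<phi> (x + real n * L)) - f x (\<psi> x)\<bar> \<le> M * \<bar>\<phi> (x + real n * L) - \<psi> x\<bar>"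
            using phab[OF xn] psiab[of x] x by (intro flip) auto
          also have "\<dots> \<le> M * (Bw * q ^ n / (1 - q))"
            using unif(1)[of x n] x M by (intro mult_left_mono) (auto simp: abs_minus_commute)
          also have "\<dots> \<le> e" using N n by (simp add: mult.assoc)
          finally show "norm (f x (\<phi> (x + real n * L)) - f x (\<psi> x)) \<le> e" by simp
        qed
      qed
      show "x0 + 1 \<in> {x0<..}" by simp
      show "(\<lambda>n. \<phi>' (x0 + 1 + real n * L)) \<longlonglongrightarrow> \<psi>' (x0 + 1)" by (rule psil) simp
    qed
    then obtain g where g: "\<forall>x \<in> {x0<..}. ((\<lambda>n. \<phi>' (x + real n * L)) \<longlongrightarrow> g x) sequentially \<and>
                       (g has_field_derivative (f x (\<psi> x))) (at x within {x0<..})" by blast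
    have "(g has_field_derivative (f t (\<psi> t))) (at t within {x0<..})" using g t by auto
    moreover have "at t within {x0<..} = at t" using t by (intro at_within_open) auto
    ultimately have gd: "(g has_field_derivative (f t (\<psi> t))) (at t)" by simp
    have ge: "g x = \<psi>' x" if "x \<in> {x0<..}" for x
    proof -
      have "(\<lambda>n. \<phi>' (x + real n * L)) \<longlonglongrightarrow> g x" using g that by blast
      moreover have "(\<lambda>n. \<phi>' (x + real n * L)) \<longlonglongrightarrow> \<psi>' x" using psil(2)[of x] that by simp
      ultimately show ?thesis by (rule LIMSEQ_unique)
    qed
    show ?thesis by (rule has_field_derivative_transform_within_open[OF gd, of "{x0<..}"]) (use t ge in auto)
  qed
  have G1: "(\<psi> has_real_derivative \<psi>' x) (at x)" "(\<psi>' has_real_derivative f x (\<psi> x)) (at x)" for x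
  proof -
    obtain n where n: "x0 - x < real n * L" using reals_Archimedean3[OF L_pos] by blast
    have t: "x + real n * L > x0" using n by simp
    have e1: "(\<lambda>y. \<psi> (y + real n * L)) = \<psi>" by (rule ext) (rule psiper_n)
    have e2: "(\<lambda>y. \<psi>' (y + real n * L)) = \<psi>'" by (rule ext) (rule psiper_n')
    have "((\<lambda>y. \<psi> (y + real n * L)) has_real_derivative \<psi>' (x + real n * L)) (at x)"
      using D1[OF t] by (simp add: DERIV_shift)
    thus "(\<psi> has_real_derivative \<psi>' x) (at x)" unfolding e1 psiper_n' .
    have "((\<lambda>y. \<psi>' (y + real n * L)) has_real_derivative f (x + real n * L) (\<psi> (x + real n * L))) (at x)"
      using D2[OF t] by (simp add: DERIV_shift)
    thus "(\<psi>' has_real_derivative f x (\<psi> x)) (at x)" unfolding e2 psiper_n fper .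
  qed
  have Elim: "(E \<longlongrightarrow> 0) at_top"
  proof -
    have "filterlim (\<lambda>x. - x0 + x) at_top at_top"
      by (rule filterlim_tendsto_add_at_top[OF tendsto_const filterlim_ident])
    hence "filterlim (\<lambda>x. x - x0) at_top at_top" by simp
    hence "filterlim (\<lambda>x. sqrt m0 * (x - x0)) at_top at_top"
      using m0 by (intro filterlim_tendsto_pos_mult_at_top[OF tendsto_const]) auto
    hence "filterlim (\<lambda>x. - (sqrt m0 * (x - x0))) at_bot at_top"
      by (simp add: filterlim_uminus_at_top)
    hence "filterlim (\<lambda>x. exp (- (sqrt m0 * (x - x0)))) (nhds 0) at_top"
      by (rule filterlim_compose[OF exp_at_bot])
    thus ?thesis unfolding E_def[abs_def] by simp
  qed
  have fin: "((\<lambda>x. \<bar>\<phi> x - \<psi> x\<bar> + \<bar>\<phi>' x - \<psi>' x\<bar>) \<longlongrightarrow> 0) at_top"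
  proof (rule tendsto_sandwich[of "\<lambda>_. 0" _ _ "\<lambda>x. ((Bw + K1) / (1 - q)) * E x"])
    show "\<forall>\<^sub>F x in at_top. 0 \<le> \<bar>\<phi> x - \<psi> x\<bar> + \<bar>\<phi>' x - \<psi>' x\<bar>" by simp
    show "\<forall>\<^sub>F x in at_top. \<bar>\<phi> x - \<psi> x\<bar> + \<bar>\<phi>' x - \<psi>' x\<bar> \<le> ((Bw + K1) / (1 - q)) * E x"
      unfolding eventually_at_top_linorder
    proof (intro exI[of _ x0] allI impI)
      fix x assume x: "x \<ge> x0"
      have "\<bar>\<psi> x - \<phi> x\<bar> \<le> Bw * E x / (1 - q)" using cs(2)[OF x, of 0] by (simp add: \<psi>_def)
      moreover have "\<bar>\<psi>' x - \<phi>' x\<bar> \<le> K1 * E x / (1 - q)" using cs'(2)[OF x, of 0] by (simp add: \<psi>'_def)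
      moreover have "((Bw + K1) / (1 - q)) * E x = Bw * E x / (1 - q) + K1 * E x / (1 - q)"
        by (simp add: add_divide_distrib distrib_right)
      ultimately show "\<bar>\<phi> x - \<psi> x\<bar> + \<bar>\<phi>' x - \<psi>' x\<bar> \<le> ((Bw + K1) / (1 - q)) * E x"
        by (simp add: abs_minus_commute)
    qed
    show "((\<lambda>_. 0) \<longlongrightarrow> (0::real)) at_top" by simp
    have "((\<lambda>x. ((Bw + K1) / (1 - q)) * E x) \<longlongrightarrow> ((Bw + K1) / (1 - q)) * 0) at_top"
      by (intro tendsto_mult tendsto_const Elim)
    thus "((\<lambda>x. ((Bw + K1) / (1 - q)) * E x) \<longlongrightarrow> 0) at_top" by simp
  qed
  show ?thesis using psiper(1) G1 fin by blast
qed
end
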